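(* Let $K_{5,6}$ be the complete bipartite graph with bipartition $(X,Y)$, $X=\{x_1,\dots,x_5\}$, $Y=\{y_1,\dots,y_6\}$, and let $S=\{x_1,x_2,y_1,y_2\}$. Then $\kappa^*_{K_{5,6}}(S)=4$.
   Context: For $S\subseteq V(G)$ with $|S|\ge 2$, an $S$-Steiner tree of $G$ is a subtree $T$ of $G$ with $S\subseteq V(T)$ all of whose leaves belong to $S$. A family of $S$-Steiner trees $T_1,\dots,T_k$ is completely independent if for all $1\le p<q\le k$: $E(T_p)\cap E(T_q)=\emptyset$, $V(T_p)\cap V(T_q)=S$, and for any two vertices $x_1,x_2\in S$ the $(x_1,x_2)$-paths in $T_p$ and in $T_q$ are internally disjoint. $\kappa^*_G(S)$ is the maximum number of trees in a completely independent family of $S$-Steiner trees in $G$. *)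

theory Defs
  imports Main
begin

text \<open>Simple undirected graphs: a pair (vertex set, edge set), edges are 2-element sets.\<close>
type_synonym 'a graph = "'a set \<times> 'a set set"

definition is_path :: "'a set set \<Rightarrow> 'a list \<Rightarrow> bool" where
  "is_path E p \<longleftrightarrow> p \<noteq> [] \<and> distinct p \<and> (\<forall>i. Suc i < length p \<longrightarrow> {p ! i, p ! Suc i} \<in> E)"

definition path_between :: "'a set set \<Rightarrow> 'a \<Rightarrow> 'a \<Rightarrow> 'a list \<Rightarrow> bool" where
  "path_between E u v p \<longleftrightarrow> is_path E p \<and> hd p = u \<and> last p = v"

definition internal_verts :: "'a list \<Rightarrow> 'a set" where
  "internal_verts p = set p - {hd p, last p}"

definition is_cycle :: "'a set set \<Rightarrow> 'a list \<Rightarrow> bool" where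
  "is_cycle E c \<longleftrightarrow> length c \<ge> 3 \<and> is_path E c \<and> {last c, hd c} \<in> E"

definition is_graph :: "'a set \<Rightarrow> 'a set set \<Rightarrow> bool" where
  "is_graph V E \<longleftrightarrow> (\<forall>e\<in>E. \<exists>u v. e = {u, v} \<and> u \<noteq> v \<and> u \<in> V \<and> v \<in> V)"

definition is_tree :: "'a set \<Rightarrow> 'a set set \<Rightarrow> bool" where
  "is_tree V E \<longleftrightarrow> finite V \<and> V \<noteq> {} \<and> is_graph V E
     \<and> (\<forall>u\<in>V. \<forall>v\<in>V. \<exists>p. path_between E u v p \<and> set p \<subseteq> V)
     \<and> \<not> (\<exists>c. is_cycle E c)"

definition degree :: "'a set set \<Rightarrow> 'a \<Rightarrow> nat" where
  "degree E v = card {e \<in> E. v \<in> e}"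

definition steiner_tree :: "'a graph \<Rightarrow> 'a set \<Rightarrow> 'a graph \<Rightarrow> bool" where
  "steiner_tree G S T \<longleftrightarrow> fst T \<subseteq> fst G \<and> snd T \<subseteq> snd G \<and> is_tree (fst T) (snd T)
     \<and> S \<subseteq> fst T \<and> (\<forall>v\<in>fst T. degree (snd T) v = 1 \<longrightarrow> v \<in> S)"

definition compl_indep :: "'a graph \<Rightarrow> 'a set \<Rightarrow> (nat \<Rightarrow> 'a graph) \<Rightarrow> nat \<Rightarrow> bool" where
  "compl_indep G S Ts k \<longleftrightarrow>
     (\<forall>i<k. steiner_tree G S (Ts i)) \<and>
     (\<forall>p q. p < q \<and> q < k \<longrightarrow>
        snd (Ts p) \<inter> snd (Ts q) = {} \<and>
        fst (Ts p) \<inter> fst (Ts q) = S \<and>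
        (\<forall>x1\<in>S. \<forall>x2\<in>S. \<forall>P Q. path_between (snd (Ts p)) x1 x2 P \<and> path_between (snd (Ts q)) x1 x2 Q
            \<longrightarrow> internal_verts P \<inter> internal_verts Q = {}))"

definition kappa_star :: "'a graph \<Rightarrow> 'a set \<Rightarrow> nat" where
  "kappa_star G S = Max {k. \<exists>Ts. compl_indep G S Ts k}"

definition complete_bipartite :: "'a set \<Rightarrow> 'a set \<Rightarrow> 'a graph" where
  "complete_bipartite X Y = (X \<union> Y, {{x, y} | x y. x \<in> X \<and> y \<in> Y})"

end

theory Submission
  imports Defs
begin
lemma is_path_Cons2: "is_path E (u#w#r) \<longleftrightarrow> {u,w}\<in>E \<and> u \<notin> set (w#r) \<and> is_path E (w#r)"
proof
  assume h: "is_path E (u#w#r)"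
  have "\<forall>i. Suc i < length (w#r) \<longrightarrow> {(w#r) ! i, (w#r) ! Suc i} \<in> E"
  proof (intro allI impI)
    fix i assume "Suc i < length (w#r)"
    then have "Suc (Suc i) < length (u#w#r)" by simp
    with h show "{(w#r) ! i, (w#r) ! Suc i} \<in> E" unfolding is_path_def by fastforce
  qed
  moreover have "{u,w} \<in> E" using h unfolding is_path_def by fastforce
  ultimately show "{u,w}\<in>E \<and> u \<notin> set (w#r) \<and> is_path E (w#r)" using h unfolding is_path_def by auto
next
  assume h: "{u,w}\<in>E \<and> u \<notin> set (w#r) \<and> is_path E (w#r)"
  show "is_path E (u#w#r)" unfolding is_path_def
  proof (intro conjI allI impI)
    fix i assume "Suc i < length (u#w#r)"
    then show "{(u#w#r) ! i, (u#w#r) ! Suc i} \<in> E" using h unfolding is_path_def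
      by (cases i) auto
  qed (use h in \<open>auto simp: is_path_def\<close>)
qed

lemma is_path_single[simp]: "is_path E [u]" by (simp add: is_path_def)

lemma cut_path: "is_path E p \<Longrightarrow> hd p \<in> U \<Longrightarrow> last p \<notin> U \<Longrightarrow> \<exists>a b. a \<in> U \<and> b \<notin> U \<and> {a,b} \<in> E"
proof (induction p)
  case Nil then show ?case by (simp add: is_path_def)
next
  case (Cons u r)
  show ?case
  proof (cases r)
    case Nil with Cons show ?thesis by simp
  next
    case (Cons w r')
    then have e: "{u,w} \<in> E" "is_path E r" using Cons.prems(1) is_path_Cons2[of E u w r'] by auto
    show ?thesis
    proof (cases "w \<in> U")
      case True
      then show ?thesis using Cons.IH e Cons.prems \<open>r = w # r'\<close> by auto
    next
      case False
      then show ?thesis using e Cons.prems by auto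
    qed
  qed
qed

lemma internal_nbrs:
  assumes "is_path E P" "w \<in> internal_verts P"
  shows "\<exists>u v. u \<noteq> v \<and> {u,w} \<in> E \<and> {w,v} \<in> E"
proof -
  have ne: "P \<noteq> []" and d: "distinct P" and ed: "\<And>i. Suc i < length P \<Longrightarrow> {P!i, P!Suc i} \<in> E"
    using assms(1) unfolding is_path_def by auto
  from assms(2) have w: "w \<in> set P" "w \<noteq> hd P" "w \<noteq> last P" unfolding internal_verts_def by auto
  then obtain i where i: "i < length P" "P ! i = w" by (auto simp: in_set_conv_nth)
  have "i \<noteq> 0" using i w ne by (metis hd_conv_nth)
  moreover have "i \<noteq> length P - 1" using i w ne by (auto simp: last_conv_nth)
  ultimately obtain j where j: "i = Suc j" "Suc i < length P" using i by (cases i) auto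
  have e1: "{P!j, w} \<in> E" using ed[of j] j i by simp
  have e2: "{w, P!Suc i} \<in> E" using ed[of i] j i by simp
  have "P!j \<noteq> P!Suc i" using d j by (simp add: nth_eq_iff_index_eq)
  then show ?thesis using e1 e2 by blast
qed

lemma cycle_nbrs:
  assumes "is_cycle E c" "w \<in> set c"
  shows "\<exists>u v. u \<noteq> v \<and> u \<in> set c \<and> v \<in> set c \<and> {u,w} \<in> E \<and> {w,v} \<in> E"
proof -
  have len: "length c \<ge> 3" and ne: "c \<noteq> []" and d: "distinct c" and ed: "\<And>i. Suc i < length c \<Longrightarrow> {c!i, c!Suc i} \<in> E"
    and cl: "{last c, hd c} \<in> E"
    using assms(1) unfolding is_cycle_def is_path_def by auto
  obtain i where i: "i < length c" "c ! i = w" using assms(2) by (auto simp: in_set_conv_nth)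
  have lc: "last c = c ! (length c - 1)" and hc: "hd c = c ! 0" using ne by (auto simp: last_conv_nth hd_conv_nth)
  consider "i = 0" | "i = length c - 1" | "0 < i \<and> i < length c - 1" using i by linarith
  then show ?thesis
  proof cases
    case 1
    have "{w, c!1} \<in> E" using ed[of 0] len 1 i by auto
    moreover have "{last c, w} \<in> E" using cl 1 i hc by simp
    moreover have "last c \<noteq> c ! 1" using d len lc by (simp add: nth_eq_iff_index_eq)
    moreover have "last c \<in> set c" using ne by simp
    moreover have "c ! 1 \<in> set c" using len by simp
    ultimately show ?thesis by blast
  next
    case 2
    have "{c!(length c - 2), c ! Suc (length c - 2)} \<in> E" using ed[of "length c - 2"] len by auto
    moreover have "Suc (length c - 2) = length c - 1" using len by auto
    ultimately have "{c!(length c - 2), w} \<in> E" using 2 i by simp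
    moreover have "{w, hd c} \<in> E" using cl 2 i lc by (simp add: insert_commute)
    moreover have "c!(length c - 2) \<noteq> hd c" unfolding hc
      using nth_eq_iff_index_eq[OF d, of "length c - 2" 0] len ne by simp
    moreover have "hd c \<in> set c" using ne by simp
    moreover have "c ! (length c - 2) \<in> set c" using len by simp
    ultimately show ?thesis by blast
  next
    case 3
    obtain j where j: "i = Suc j" using 3 by (cases i) auto
    have e1: "{c!j, w} \<in> E" using ed[of j] j i by simp
    have "Suc i < length c" using 3 by linarith
    then have e2: "{w, c!Suc i} \<in> E" using ed[of i] i by simp
    have "c!j \<noteq> c!Suc i" using d 3 j by (simp add: nth_eq_iff_index_eq)
    moreover have "c!j \<in> set c" "c!Suc i \<in> set c" using 3 j by auto
    ultimately show ?thesis using e1 e2 by blast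
  qed
qed
lemma is_path_rev: assumes "is_path E p" shows "is_path E (rev p)"
proof -
  have ne: "p \<noteq> []" and d: "distinct p" and ed: "\<And>i. Suc i < length p \<Longrightarrow> {p!i, p!Suc i} \<in> E"
    using assms unfolding is_path_def by auto
  have "{rev p ! i, rev p ! Suc i} \<in> E" if "Suc i < length (rev p)" for i
  proof -
    have "{p ! (length p - Suc (Suc i)), p ! Suc (length p - Suc (Suc i))} \<in> E" using ed that by auto
    moreover have "Suc (length p - Suc (Suc i)) = length p - Suc i" using that by auto
    ultimately show ?thesis using that by (simp add: rev_nth insert_commute)
  qed
  then show ?thesis using ne d unfolding is_path_def by auto
qed

definition conn :: "'a set set \<Rightarrow> 'a set \<Rightarrow> 'a \<Rightarrow> 'a \<Rightarrow> bool" where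
  "conn E V u v \<longleftrightarrow> (\<exists>p. path_between E u v p \<and> set p \<subseteq> V)"

lemma conn_sym: "conn E V u v \<Longrightarrow> conn E V v u"
  unfolding conn_def path_between_def
  by (metis is_path_rev is_path_def hd_rev last_rev set_rev)

lemma conn_refl: "u \<in> V \<Longrightarrow> conn E V u u"
  unfolding conn_def path_between_def by (rule exI[of _ "[u]"]) simp

lemma conn_path: "path_between E u v p \<Longrightarrow> set p \<subseteq> V \<Longrightarrow> conn E V u v"
  unfolding conn_def by blast

lemma conn_all: "(\<And>u v. u \<in> V \<Longrightarrow> v \<in> V \<Longrightarrow> conn E V u v) \<Longrightarrow> \<forall>u\<in>V. \<forall>v\<in>V. \<exists>p. path_between E u v p \<and> set p \<subseteq> V"
  unfolding conn_def by blast

lemma dstar_tree: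
  assumes "distinct [l1,l2,l3,l4,a,b]"
  shows "is_tree {l1,l2,l3,l4,a,b} {{a,l1},{a,l2},{a,b},{b,l3},{b,l4}}" (is "is_tree ?V ?E")
proof -
  have d: "l1 \<noteq> l2" "l1 \<noteq> l3" "l1 \<noteq> l4" "l1 \<noteq> a" "l1 \<noteq> b" "l2 \<noteq> l3" "l2 \<noteq> l4" "l2 \<noteq> a" "l2 \<noteq> b"
    "l3 \<noteq> l4" "l3 \<noteq> a" "l3 \<noteq> b" "l4 \<noteq> a" "l4 \<noteq> b" "a \<noteq> b" using assms by auto
  note dd = d d[THEN not_sym]
  have c: "conn ?E ?V u v" if "u \<in> ?V" "v \<in> ?V" for u v
  proof -
    have f: "path_between ?E u v p \<Longrightarrow> set p \<subseteq> ?V \<Longrightarrow> conn ?E ?V u v" for u v p by (rule conn_path)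
    have pp0: "conn ?E ?V l1 l2" by (rule f[of _ _ "[l1,a,l2]"]) (simp_all add: dd path_between_def is_path_Cons2 insert_commute)
    have pp1: "conn ?E ?V l1 l3" by (rule f[of _ _ "[l1,a,b,l3]"]) (simp_all add: dd path_between_def is_path_Cons2 insert_commute)
    have pp2: "conn ?E ?V l1 l4" by (rule f[of _ _ "[l1,a,b,l4]"]) (simp_all add: dd path_between_def is_path_Cons2 insert_commute)
    have pp3: "conn ?E ?V l1 a" by (rule f[of _ _ "[l1,a]"]) (simp_all add: dd path_between_def is_path_Cons2 insert_commute)
    have pp4: "conn ?E ?V l1 b" by (rule f[of _ _ "[l1,a,b]"]) (simp_all add: dd path_between_def is_path_Cons2 insert_commute)
    have pp5: "conn ?E ?V l2 l3" by (rule f[of _ _ "[l2,a,b,l3]"]) (simp_all add: dd path_between_def is_path_Cons2 insert_commute)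
    have pp6: "conn ?E ?V l2 l4" by (rule f[of _ _ "[l2,a,b,l4]"]) (simp_all add: dd path_between_def is_path_Cons2 insert_commute)
    have pp7: "conn ?E ?V l2 a" by (rule f[of _ _ "[l2,a]"]) (simp_all add: dd path_between_def is_path_Cons2 insert_commute)
    have pp8: "conn ?E ?V l2 b" by (rule f[of _ _ "[l2,a,b]"]) (simp_all add: dd path_between_def is_path_Cons2 insert_commute)
    have pp9: "conn ?E ?V l3 l4" by (rule f[of _ _ "[l3,b,l4]"]) (simp_all add: dd path_between_def is_path_Cons2 insert_commute)
    have pp10: "conn ?E ?V l3 a" by (rule f[of _ _ "[l3,b,a]"]) (simp_all add: dd path_between_def is_path_Cons2 insert_commute)
    have pp11: "conn ?E ?V l3 b" by (rule f[of _ _ "[l3,b]"]) (simp_all add: dd path_between_def is_path_Cons2 insert_commute)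
    have pp12: "conn ?E ?V l4 a" by (rule f[of _ _ "[l4,b,a]"]) (simp_all add: dd path_between_def is_path_Cons2 insert_commute)
    have pp13: "conn ?E ?V l4 b" by (rule f[of _ _ "[l4,b]"]) (simp_all add: dd path_between_def is_path_Cons2 insert_commute)
    have pp14: "conn ?E ?V a b" by (rule f[of _ _ "[a,b]"]) (simp_all add: dd path_between_def is_path_Cons2 insert_commute)
    note pp = pp0 pp1 pp2 pp3 pp4 pp5 pp6 pp7 pp8 pp9 pp10 pp11 pp12 pp13 pp14
    show ?thesis using that by (auto intro: pp pp[THEN conn_sym] conn_refl)
  qed
  have nc: "\<not> (\<exists>c. is_cycle ?E c)"
  proof
    define E where "E = ?E"
    define V where "V = ?V"
    assume "\<exists>c. is_cycle ?E c"
    then obtain c where cy: "is_cycle E c" unfolding E_def by blast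
    let ?C = "set c"
    have nb: "\<And>w. w \<in> ?C \<Longrightarrow> \<exists>u v. u \<noteq> v \<and> u \<in> ?C \<and> v \<in> ?C \<and> {u,w} \<in> E \<and> {w,v} \<in> E"
      using cycle_nbrs[OF cy] by blast
    have n1: "\<And>u. {u,l1} \<in> E \<Longrightarrow> u = a" "\<And>u. {l1,u} \<in> E \<Longrightarrow> u = a"
      "\<And>u. {u,l2} \<in> E \<Longrightarrow> u = a" "\<And>u. {l2,u} \<in> E \<Longrightarrow> u = a"
      "\<And>u. {u,l3} \<in> E \<Longrightarrow> u = b" "\<And>u. {l3,u} \<in> E \<Longrightarrow> u = b"
      "\<And>u. {u,l4} \<in> E \<Longrightarrow> u = b" "\<And>u. {l4,u} \<in> E \<Longrightarrow> u = b"
      "\<And>u. {u,a} \<in> E \<Longrightarrow> u = l1 \<or> u = l2 \<or> u = b" "\<And>u. {a,u} \<in> E \<Longrightarrow> u = l1 \<or> u = l2 \<or> u = b"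
      "\<And>u. {u,b} \<in> E \<Longrightarrow> u = l3 \<or> u = l4 \<or> u = a" "\<And>u. {b,u} \<in> E \<Longrightarrow> u = l3 \<or> u = l4 \<or> u = a"
      "\<And>u w. {u,w} \<in> E \<Longrightarrow> w \<in> V"
      unfolding E_def V_def using dd by (auto simp: doubleton_eq_iff)
    have "l1 \<notin> ?C"
    proof
      assume "l1 \<in> ?C"
      then obtain u v where "u \<noteq> v" "{u,l1} \<in> E" "{l1,v} \<in> E" using nb by blast
      then show False using n1(1)[of u] n1(2)[of v] by simp
    qed
    have "l2 \<notin> ?C"
    proof
      assume "l2 \<in> ?C"
      then obtain u v where "u \<noteq> v" "{u,l2} \<in> E" "{l2,v} \<in> E" using nb by blast
      then show False using n1(3)[of u] n1(4)[of v] by simp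
    qed
    have "l3 \<notin> ?C"
    proof
      assume "l3 \<in> ?C"
      then obtain u v where "u \<noteq> v" "{u,l3} \<in> E" "{l3,v} \<in> E" using nb by blast
      then show False using n1(5)[of u] n1(6)[of v] by simp
    qed
    have "l4 \<notin> ?C"
    proof
      assume "l4 \<in> ?C"
      then obtain u v where "u \<noteq> v" "{u,l4} \<in> E" "{l4,v} \<in> E" using nb by blast
      then show False using n1(7)[of u] n1(8)[of v] by simp
    qed
    have "a \<notin> ?C"
    proof
      assume "a \<in> ?C"
      then obtain u v where "u \<noteq> v" "u \<in> ?C" "v \<in> ?C" "{u,a} \<in> E" "{a,v} \<in> E" using nb by blast
      then show False using n1(9)[of u] n1(10)[of v] \<open>l1 \<notin> ?C\<close> \<open>l2 \<notin> ?C\<close> by auto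
    qed
    have "b \<notin> ?C"
    proof
      assume "b \<in> ?C"
      then obtain u v where "u \<noteq> v" "u \<in> ?C" "v \<in> ?C" "{u,b} \<in> E" "{b,v} \<in> E" using nb by blast
      then show False using n1(11)[of u] n1(12)[of v] \<open>l3 \<notin> ?C\<close> \<open>l4 \<notin> ?C\<close> by auto
    qed
    obtain w where w: "w \<in> ?C" using cy unfolding is_cycle_def by (cases c) auto
    then have "w \<in> V" using nb[of w] n1(13) by blast
    then show False unfolding V_def using w \<open>a \<notin> ?C\<close> \<open>b \<notin> ?C\<close> \<open>l1 \<notin> ?C\<close> \<open>l2 \<notin> ?C\<close> \<open>l3 \<notin> ?C\<close> \<open>l4 \<notin> ?C\<close> by blast
  qed
  have g: "is_graph ?V ?E" unfolding is_graph_def using dd by auto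
  have cc: "\<forall>u\<in>?V. \<forall>v\<in>?V. \<exists>p. path_between ?E u v p \<and> set p \<subseteq> ?V"
    by (rule conn_all) (rule c)
  show ?thesis unfolding is_tree_def
    by (intro conjI g cc nc) simp_all
qed
lemma path4_tree:
  assumes "distinct [p1,p2,p3,p4]"
  shows "is_tree {p1,p2,p3,p4} {{p1,p2},{p2,p3},{p3,p4}}" (is "is_tree ?V ?E")
proof -
  have d: "p1 \<noteq> p2" "p1 \<noteq> p3" "p1 \<noteq> p4" "p2 \<noteq> p3" "p2 \<noteq> p4" "p3 \<noteq> p4" using assms by auto
  note dd = d d[THEN not_sym]
  have c: "conn ?E ?V u v" if "u \<in> ?V" "v \<in> ?V" for u v
  proof -
    have f: "path_between ?E u v p \<Longrightarrow> set p \<subseteq> ?V \<Longrightarrow> conn ?E ?V u v" for u v p by (rule conn_path)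
    have pp0: "conn ?E ?V p1 p2" by (rule f[of _ _ "[p1,p2]"]) (simp_all add: dd path_between_def is_path_Cons2 insert_commute)
    have pp1: "conn ?E ?V p1 p3" by (rule f[of _ _ "[p1,p2,p3]"]) (simp_all add: dd path_between_def is_path_Cons2 insert_commute)
    have pp2: "conn ?E ?V p1 p4" by (rule f[of _ _ "[p1,p2,p3,p4]"]) (simp_all add: dd path_between_def is_path_Cons2 insert_commute)
    have pp3: "conn ?E ?V p2 p3" by (rule f[of _ _ "[p2,p3]"]) (simp_all add: dd path_between_def is_path_Cons2 insert_commute)
    have pp4: "conn ?E ?V p2 p4" by (rule f[of _ _ "[p2,p3,p4]"]) (simp_all add: dd path_between_def is_path_Cons2 insert_commute)
    have pp5: "conn ?E ?V p3 p4" by (rule f[of _ _ "[p3,p4]"]) (simp_all add: dd path_between_def is_path_Cons2 insert_commute)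
    note pp = pp0 pp1 pp2 pp3 pp4 pp5
    show ?thesis using that by (auto intro: pp pp[THEN conn_sym] conn_refl)
  qed
  have nc: "\<not> (\<exists>c. is_cycle ?E c)"
  proof
    define E where "E = ?E"
    define V where "V = ?V"
    assume "\<exists>c. is_cycle ?E c"
    then obtain c where cy: "is_cycle E c" unfolding E_def by blast
    let ?C = "set c"
    have nb: "\<And>w. w \<in> ?C \<Longrightarrow> \<exists>u v. u \<noteq> v \<and> u \<in> ?C \<and> v \<in> ?C \<and> {u,w} \<in> E \<and> {w,v} \<in> E"
      using cycle_nbrs[OF cy] by blast
    have n1: "\<And>u. {u,p1} \<in> E \<Longrightarrow> u = p2" "\<And>u. {p1,u} \<in> E \<Longrightarrow> u = p2"
      "\<And>u. {u,p4} \<in> E \<Longrightarrow> u = p3" "\<And>u. {p4,u} \<in> E \<Longrightarrow> u = p3"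
      "\<And>u. {u,p2} \<in> E \<Longrightarrow> u = p1 \<or> u = p3" "\<And>u. {p2,u} \<in> E \<Longrightarrow> u = p1 \<or> u = p3"
      "\<And>u. {u,p3} \<in> E \<Longrightarrow> u = p2 \<or> u = p4" "\<And>u. {p3,u} \<in> E \<Longrightarrow> u = p2 \<or> u = p4"
      "\<And>u w. {u,w} \<in> E \<Longrightarrow> w \<in> V"
      unfolding E_def V_def using dd by (auto simp: doubleton_eq_iff)
    have "p1 \<notin> ?C"
    proof
      assume "p1 \<in> ?C"
      then obtain u v where "u \<noteq> v" "{u,p1} \<in> E" "{p1,v} \<in> E" using nb by blast
      then show False using n1(1)[of u] n1(2)[of v] by simp
    qed
    have "p4 \<notin> ?C"
    proof
      assume "p4 \<in> ?C"
      then obtain u v where "u \<noteq> v" "{u,p4} \<in> E" "{p4,v} \<in> E" using nb by blast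
      then show False using n1(3)[of u] n1(4)[of v] by simp
    qed
    have "p2 \<notin> ?C"
    proof
      assume "p2 \<in> ?C"
      then obtain u v where "u \<noteq> v" "u \<in> ?C" "v \<in> ?C" "{u,p2} \<in> E" "{p2,v} \<in> E" using nb by blast
      then show False using n1(5)[of u] n1(6)[of v] \<open>p1 \<notin> ?C\<close> by auto
    qed
    have "p3 \<notin> ?C"
    proof
      assume "p3 \<in> ?C"
      then obtain u v where "u \<noteq> v" "u \<in> ?C" "v \<in> ?C" "{u,p3} \<in> E" "{p3,v} \<in> E" using nb by blast
      then show False using n1(7)[of u] n1(8)[of v] \<open>p4 \<notin> ?C\<close> by auto
    qed
    obtain w where w: "w \<in> ?C" using cy unfolding is_cycle_def by (cases c) auto
    then have "w \<in> V" using nb[of w] n1(9) by blast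
    then show False unfolding V_def using w \<open>p1 \<notin> ?C\<close> \<open>p2 \<notin> ?C\<close> \<open>p3 \<notin> ?C\<close> \<open>p4 \<notin> ?C\<close> by blast
  qed
  have g: "is_graph ?V ?E" unfolding is_graph_def using dd by auto
  have cc: "\<forall>u\<in>?V. \<forall>v\<in>?V. \<exists>p. path_between ?E u v p \<and> set p \<subseteq> ?V"
    by (rule conn_all) (rule c)
  show ?thesis unfolding is_tree_def
    by (intro conjI g cc nc) simp_all
qed

lemma dstar_leaf:
  assumes "distinct [l1,l2,l3,l4,a,b]"
  shows "degree {{a,l1},{a,l2},{a,b},{b,l3},{b,l4}} a \<noteq> 1" "degree {{a,l1},{a,l2},{a,b},{b,l3},{b,l4}} b \<noteq> 1"
proof -
  have d: "l1 \<noteq> l2" "l1 \<noteq> l3" "l1 \<noteq> l4" "l1 \<noteq> a" "l1 \<noteq> b" "l2 \<noteq> l3" "l2 \<noteq> l4" "l2 \<noteq> a" "l2 \<noteq> b"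
    "l3 \<noteq> l4" "l3 \<noteq> a" "l3 \<noteq> b" "l4 \<noteq> a" "l4 \<noteq> b" "a \<noteq> b" using assms by auto
  note dd = d d[THEN not_sym]
  have "{e \<in> {{a,l1},{a,l2},{a,b},{b,l3},{b,l4}}. a \<in> e} = {{a,l1},{a,l2},{a,b}}" using dd by auto
  moreover have "card {{a,l1},{a,l2},{a,b}} = 3" using dd by (simp add: doubleton_eq_iff)
  ultimately show "degree {{a,l1},{a,l2},{a,b},{b,l3},{b,l4}} a \<noteq> 1" unfolding degree_def by simp
  have "{e \<in> {{a,l1},{a,l2},{a,b},{b,l3},{b,l4}}. b \<in> e} = {{a,b},{b,l3},{b,l4}}" using dd by auto
  moreover have "card {{a,b},{b,l3},{b,l4}} = 3" using dd by (simp add: doubleton_eq_iff)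
  ultimately show "degree {{a,l1},{a,l2},{a,b},{b,l3},{b,l4}} b \<noteq> 1" unfolding degree_def by simp
qed

lemma dstar_nbrs:
  assumes "distinct [l1,l2,l3,l4,a,b]" "u \<noteq> v" "{u,w} \<in> {{a,l1},{a,l2},{a,b},{b,l3},{b,l4}}"
    "{w,v} \<in> {{a,l1},{a,l2},{a,b},{b,l3},{b,l4}}"
  shows "w = a \<or> w = b"
  using assms by (auto simp: doubleton_eq_iff)

lemma graph_mem: "is_graph V E \<Longrightarrow> {u,w} \<in> E \<Longrightarrow> u \<in> V \<and> w \<in> V"
  unfolding is_graph_def by (auto simp: doubleton_eq_iff)
definition dstar :: "'a \<Rightarrow> 'a \<Rightarrow> 'a \<Rightarrow> 'a \<Rightarrow> 'a \<Rightarrow> 'a \<Rightarrow> 'a graph" where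
  "dstar l1 l2 l3 l4 a b = ({l1,l2,l3,l4,a,b}, {{a,l1},{a,l2},{a,b},{b,l3},{b,l4}})"

lemma pair_ok:
  assumes "is_graph Vp Ep" "a \<notin> Vp" "b \<notin> Vp" "distinct [l1,l2,l3,l4,a,b]"
    "Vp \<inter> fst (dstar l1 l2 l3 l4 a b) = S" "Ep \<inter> snd (dstar l1 l2 l3 l4 a b) = {}"
  shows "Ep \<inter> snd (dstar l1 l2 l3 l4 a b) = {} \<and> Vp \<inter> fst (dstar l1 l2 l3 l4 a b) = S \<and>
    (\<forall>x1\<in>S. \<forall>x2\<in>S. \<forall>P Q. path_between Ep x1 x2 P \<and> path_between (snd (dstar l1 l2 l3 l4 a b)) x1 x2 Q
       \<longrightarrow> internal_verts P \<inter> internal_verts Q = {})"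
proof (intro conjI assms(5,6) ballI allI impI)
  fix x1 x2 P Q
  assume h: "path_between Ep x1 x2 P \<and> path_between (snd (dstar l1 l2 l3 l4 a b)) x1 x2 Q"
  show "internal_verts P \<inter> internal_verts Q = {}"
  proof (rule ccontr)
    assume "internal_verts P \<inter> internal_verts Q \<noteq> {}"
    then obtain w where w: "w \<in> internal_verts P" "w \<in> internal_verts Q" by blast
    obtain u v where "u \<noteq> v" "{u,w} \<in> snd (dstar l1 l2 l3 l4 a b)" "{w,v} \<in> snd (dstar l1 l2 l3 l4 a b)"
      using internal_nbrs[OF _ w(2)] h unfolding path_between_def by blast
    then have "w = a \<or> w = b" using dstar_nbrs[OF assms(4)] unfolding dstar_def by simp
    moreover obtain u' v' where "{u',w} \<in> Ep"
      using internal_nbrs[OF _ w(1)] h unfolding path_between_def by blast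
    then have "w \<in> Vp" using graph_mem[OF assms(1)] by blast
    ultimately show False using assms(2,3) by blast
  qed
qed

lemma disj_edges: "(\<And>e. e \<in> A \<Longrightarrow> e \<subseteq> U) \<Longrightarrow> (\<And>e. e \<in> B \<Longrightarrow> \<exists>z\<in>e. z \<notin> U) \<Longrightarrow> A \<inter> B = {}"
  by blast

lemma T0_D:
  assumes "distinct [x1,x2,a,y1,y2,b]"
  shows "snd ({x1,y1,x2,y2}, {{x1,y1},{y1,x2},{x2,y2}}) \<inter> snd (dstar y1 y2 x1 x2 a b) = {} \<and>
    fst ({x1,y1,x2,y2}, {{x1,y1},{y1,x2},{x2,y2}}) \<inter> fst (dstar y1 y2 x1 x2 a b) = {x1,x2,y1,y2} \<and>
    (\<forall>s1\<in>{x1,x2,y1,y2}. \<forall>s2\<in>{x1,x2,y1,y2}. \<forall>P Q. path_between (snd ({x1,y1,x2,y2}, {{x1,y1},{y1,x2},{x2,y2}})) s1 s2 P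
       \<and> path_between (snd (dstar y1 y2 x1 x2 a b)) s1 s2 Q
       \<longrightarrow> internal_verts P \<inter> internal_verts Q = {})"
proof (rule pair_ok)
  show "is_graph (fst ({x1,y1,x2,y2}, {{x1,y1},{y1,x2},{x2,y2}})) (snd ({x1,y1,x2,y2}, {{x1,y1},{y1,x2},{x2,y2}}))"
    using path4_tree[of x1 y1 x2 y2] assms unfolding is_tree_def by auto
  show "fst ({x1,y1,x2,y2}, {{x1,y1},{y1,x2},{x2,y2}}) \<inter> fst (dstar y1 y2 x1 x2 a b) = {x1,x2,y1,y2}"
    using assms by (auto simp: dstar_def)
  show "snd ({x1,y1,x2,y2}, {{x1,y1},{y1,x2},{x2,y2}}) \<inter> snd (dstar y1 y2 x1 x2 a b) = {}"
    by (rule disj_edges[where U = "{x1,y1,x2,y2}"]) (use assms in \<open>auto simp: dstar_def\<close>)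
qed (use assms in auto)

lemma D_D:
  assumes "distinct [x1,x2,a,a',y1,y2,b,b']"
  shows "snd (dstar y1 y2 x1 x2 a b) \<inter> snd (dstar y1 y2 x1 x2 a' b') = {} \<and>
    fst (dstar y1 y2 x1 x2 a b) \<inter> fst (dstar y1 y2 x1 x2 a' b') = {x1,x2,y1,y2} \<and>
    (\<forall>s1\<in>{x1,x2,y1,y2}. \<forall>s2\<in>{x1,x2,y1,y2}. \<forall>P Q. path_between (snd (dstar y1 y2 x1 x2 a b)) s1 s2 P
       \<and> path_between (snd (dstar y1 y2 x1 x2 a' b')) s1 s2 Q
       \<longrightarrow> internal_verts P \<inter> internal_verts Q = {})"
proof (rule pair_ok)
  show "is_graph (fst (dstar y1 y2 x1 x2 a b)) (snd (dstar y1 y2 x1 x2 a b))"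
  proof -
    have "distinct [y1,y2,x1,x2,a,b]" using assms by auto
    then have "is_tree {y1,y2,x1,x2,a,b} {{a,y1},{a,y2},{a,b},{b,x1},{b,x2}}" by (rule dstar_tree)
    then show ?thesis unfolding is_tree_def dstar_def by simp
  qed
  show "fst (dstar y1 y2 x1 x2 a b) \<inter> fst (dstar y1 y2 x1 x2 a' b') = {x1,x2,y1,y2}"
    using assms by (auto simp: dstar_def)
  show "snd (dstar y1 y2 x1 x2 a b) \<inter> snd (dstar y1 y2 x1 x2 a' b') = {}"
    by (rule disj_edges[where U = "{y1,y2,x1,x2,a,b}"]) (use assms in \<open>auto simp: dstar_def\<close>)
qed (use assms in \<open>auto simp: dstar_def\<close>)

lemma steiner_dstar:
  assumes "distinct [y1,y2,x1,x2,a,b]" "x1 \<in> X" "x2 \<in> X" "a \<in> X" "y1 \<in> Y" "y2 \<in> Y" "b \<in> Y"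
  shows "steiner_tree (complete_bipartite X Y) {x1,x2,y1,y2} (dstar y1 y2 x1 x2 a b)"
  unfolding steiner_tree_def
proof (intro conjI)
  show "fst (dstar y1 y2 x1 x2 a b) \<subseteq> fst (complete_bipartite X Y)"
    using assms by (auto simp: dstar_def complete_bipartite_def)
  show "snd (dstar y1 y2 x1 x2 a b) \<subseteq> snd (complete_bipartite X Y)"
    using assms unfolding dstar_def complete_bipartite_def by (auto simp: insert_commute)
  show "is_tree (fst (dstar y1 y2 x1 x2 a b)) (snd (dstar y1 y2 x1 x2 a b))"
    unfolding dstar_def using dstar_tree[OF assms(1)] by simp
  show "{x1, x2, y1, y2} \<subseteq> fst (dstar y1 y2 x1 x2 a b)" by (auto simp: dstar_def)
  show "\<forall>v\<in>fst (dstar y1 y2 x1 x2 a b). degree (snd (dstar y1 y2 x1 x2 a b)) v = 1 \<longrightarrow> v \<in> {x1, x2, y1, y2}"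
    using dstar_leaf[OF assms(1)] by (auto simp: dstar_def)
qed

lemma lower:
  assumes dist: "distinct [x1,x2,x3,x4,x5,y1,y2,y3,y4,y5]"
    and X: "{x1,x2,x3,x4,x5} \<subseteq> X" and Y: "{y1,y2,y3,y4,y5} \<subseteq> Y"
  shows "\<exists>Ts. compl_indep (complete_bipartite X Y) {x1,x2,y1,y2} Ts 4"
proof -
  define T0 where "T0 = ({x1,y1,x2,y2}, {{x1,y1},{y1,x2},{x2,y2}})"
  define Ts where "Ts i = (if i = 0 then T0 else if i = 1 then dstar y1 y2 x1 x2 x3 y3
     else if i = 2 then dstar y1 y2 x1 x2 x4 y4 else dstar y1 y2 x1 x2 x5 y5)" for i :: nat
  let ?G = "complete_bipartite X Y"
  let ?S = "{x1,x2,y1,y2}"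
  have t0: "is_tree (fst T0) (snd T0)" unfolding T0_def using path4_tree[of x1 y1 x2 y2] dist by auto
  have st0: "steiner_tree ?G ?S T0" unfolding steiner_tree_def
  proof (intro conjI t0)
    show "fst T0 \<subseteq> fst ?G" using X Y by (auto simp: T0_def complete_bipartite_def)
    show "snd T0 \<subseteq> snd ?G" using X Y unfolding T0_def complete_bipartite_def by (auto simp: insert_commute)
  qed (auto simp: T0_def)
  have st: "steiner_tree ?G ?S (Ts i)" if "i < 4" for i
  proof -
    have "i = 0 \<or> i = 1 \<or> i = 2 \<or> i = 3" using that by auto
    then show ?thesis
      using st0 steiner_dstar[of y1 y2 x1 x2 x3 y3 X Y] steiner_dstar[of y1 y2 x1 x2 x4 y4 X Y]
        steiner_dstar[of y1 y2 x1 x2 x5 y5 X Y] dist X Y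
      by (auto simp: Ts_def)
  qed
  have pr: "snd (Ts p) \<inter> snd (Ts q) = {} \<and> fst (Ts p) \<inter> fst (Ts q) = ?S \<and>
        (\<forall>x1\<in>?S. \<forall>x2\<in>?S. \<forall>P Q. path_between (snd (Ts p)) x1 x2 P \<and> path_between (snd (Ts q)) x1 x2 Q
            \<longrightarrow> internal_verts P \<inter> internal_verts Q = {})" if "p < q" "q < 4" for p q
  proof -
    have "(p = 0 \<and> q = 1) \<or> (p = 0 \<and> q = 2) \<or> (p = 0 \<and> q = 3) \<or> (p = 1 \<and> q = 2) \<or> (p = 1 \<and> q = 3) \<or> (p = 2 \<and> q = 3)"
      using that by auto
    moreover have ts: "Ts 0 = T0" "Ts 1 = dstar y1 y2 x1 x2 x3 y3" "Ts 2 = dstar y1 y2 x1 x2 x4 y4"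
      "Ts 3 = dstar y1 y2 x1 x2 x5 y5" by (simp_all add: Ts_def)
    ultimately show ?thesis
    proof (elim disjE conjE)
      assume "p = 0" "q = 1"
      show ?thesis unfolding \<open>p = 0\<close> \<open>q = 1\<close> ts T0_def by (rule T0_D) (use dist in simp)
    next
      assume "p = 0" "q = 2"
      show ?thesis unfolding \<open>p = 0\<close> \<open>q = 2\<close> ts T0_def by (rule T0_D) (use dist in simp)
    next
      assume "p = 0" "q = 3"
      show ?thesis unfolding \<open>p = 0\<close> \<open>q = 3\<close> ts T0_def by (rule T0_D) (use dist in simp)
    next
      assume "p = 1" "q = 2"
      show ?thesis unfolding \<open>p = 1\<close> \<open>q = 2\<close> ts by (rule D_D) (use dist in simp)
    next
      assume "p = 1" "q = 3"
      show ?thesis unfolding \<open>p = 1\<close> \<open>q = 3\<close> ts by (rule D_D) (use dist in simp)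
    next
      assume "p = 2" "q = 3"
      show ?thesis unfolding \<open>p = 2\<close> \<open>q = 3\<close> ts by (rule D_D) (use dist in simp)
    qed
  qed
  have A: "\<forall>i<4. steiner_tree ?G ?S (Ts i)" using st by blast
  have B: "\<forall>p q. p < q \<and> q < 4 \<longrightarrow> snd (Ts p) \<inter> snd (Ts q) = {} \<and> fst (Ts p) \<inter> fst (Ts q) = ?S \<and>
        (\<forall>x1\<in>?S. \<forall>x2\<in>?S. \<forall>P Q. path_between (snd (Ts p)) x1 x2 P \<and> path_between (snd (Ts q)) x1 x2 Q
            \<longrightarrow> internal_verts P \<inter> internal_verts Q = {})"
    by (intro allI impI) (erule conjE, erule (1) pr)
  show ?thesis unfolding compl_indep_def by (rule exI[of _ Ts]) (rule conjI[OF A B])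
qed
lemma card_list_le: "finite A \<Longrightarrow> set l \<subseteq> A \<Longrightarrow> distinct l \<Longrightarrow> length l \<le> card A"
  by (metis card_mono distinct_card)

lemma three_edges_card:
  assumes "finite I" "(a1,e1)\<in>I" "(b1,e1)\<in>I" "(a2,e2)\<in>I" "(b2,e2)\<in>I" "(a3,e3)\<in>I" "(b3,e3)\<in>I"
    "a1\<noteq>b1" "a2\<noteq>b2" "a3\<noteq>b3" "e1\<noteq>e2" "e1\<noteq>e3" "e2\<noteq>e3"
  shows "6 \<le> card I"
proof -
  have "length [(a1,e1),(b1,e1),(a2,e2),(b2,e2),(a3,e3),(b3,e3)] \<le> card I"
    by (rule card_list_le) (use assms in auto)
  then show ?thesis by simp
qed

lemma four_edges_card:
  assumes "finite I" "(a1,e1)\<in>I" "(a2,e2)\<in>I" "(a3,e3)\<in>I" "(b3,e3)\<in>I" "(a4,e4)\<in>I" "(b4,e4)\<in>I"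
    "a3\<noteq>b3" "a4\<noteq>b4" "e1\<noteq>e2" "e1\<noteq>e3" "e1\<noteq>e4" "e2\<noteq>e3" "e2\<noteq>e4" "e3\<noteq>e4"
  shows "6 \<le> card I"
proof -
  have "length [(a1,e1),(a2,e2),(a3,e3),(b3,e3),(a4,e4),(b4,e4)] \<le> card I"
    by (rule card_list_le) (use assms in auto)
  then show ?thesis by simp
qed

lemma card_two: "finite A \<Longrightarrow> 2 \<le> card A \<Longrightarrow> \<exists>a b. a \<in> A \<and> b \<in> A \<and> a \<noteq> b"
  using card_le_Suc0_iff_eq by fastforce
lemma tree_cost:
  fixes X Y :: "'a set"
  assumes XY: "X \<inter> Y = {}" and fX: "finite X" and fY: "finite Y"
    and xs: "x1 \<in> X" "x2 \<in> X" "y1 \<in> Y" "y2 \<in> Y" "x1 \<noteq> x2" "y1 \<noteq> y2"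
    and st: "steiner_tree (complete_bipartite X Y) {x1,x2,y1,y2} T"
  shows "4 \<le> card (SIGMA s:{x1,x2,y1,y2}. {e \<in> snd T. s \<in> e})"
    and "card (fst T - {x1,x2,y1,y2}) \<le> 1 \<Longrightarrow> 6 \<le> card (SIGMA s:{x1,x2,y1,y2}. {e \<in> snd T. s \<in> e})"
proof -
  define S where "S = {x1,x2,y1,y2}"
  define V where "V = fst T"
  define E where "E = snd T"
  define I where "I = (SIGMA s:S. {e \<in> E. s \<in> e})"
  have VG: "V \<subseteq> X \<union> Y" and EG: "E \<subseteq> {{x,y}|x y. x\<in>X \<and> y\<in>Y}" and tr: "is_tree V E" and SV: "S \<subseteq> V"
    and leaf: "\<forall>v\<in>V. degree E v = 1 \<longrightarrow> v \<in> S"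
    using st unfolding steiner_tree_def complete_bipartite_def S_def V_def E_def by auto
  have fEG: "finite {{x,y}|x y. x\<in>X \<and> y\<in>Y}"
  proof -
    have "{{x,y}|x y. x\<in>X \<and> y\<in>Y} = (\<lambda>(x,y). {x,y}) ` (X \<times> Y)" by auto
    then show ?thesis using fX fY by simp
  qed
  have fE: "finite E" using finite_subset[OF EG fEG] .
  have fS: "finite S" unfolding S_def by simp
  have fI: "finite I" unfolding I_def using fS fE by auto
  have fV: "finite V" using tr unfolding is_tree_def by blast
  have gr: "is_graph V E" using tr unfolding is_tree_def by blast
  have conn: "\<forall>u\<in>V. \<forall>v\<in>V. \<exists>p. path_between E u v p \<and> set p \<subseteq> V" using tr unfolding is_tree_def by blast
  have ed: "\<And>e. e \<in> E \<Longrightarrow> \<exists>a b. e = {a,b} \<and> a \<in> X \<and> b \<in> Y" using EG by blast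
  have side: "\<And>u w. {u,w} \<in> E \<Longrightarrow> (u \<in> X \<and> w \<in> Y) \<or> (u \<in> Y \<and> w \<in> X)"
  proof -
    fix u w assume "{u,w} \<in> E"
    then obtain a b where "{u,w} = {a,b}" "a \<in> X" "b \<in> Y" using ed by blast
    then show "(u \<in> X \<and> w \<in> Y) \<or> (u \<in> Y \<and> w \<in> X)" by (auto simp: doubleton_eq_iff)
  qed
  have opp: "\<And>u w. {u,w} \<in> E \<Longrightarrow> u \<in> X \<Longrightarrow> w \<in> Y" "\<And>u w. {u,w} \<in> E \<Longrightarrow> u \<in> Y \<Longrightarrow> w \<in> X"
    using side XY by blast+
  have inV: "\<And>u w. {u,w} \<in> E \<Longrightarrow> u \<in> V \<and> w \<in> V" using graph_mem[OF gr] .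
  have cut: "\<And>u w U. u \<in> V \<Longrightarrow> w \<in> V \<Longrightarrow> u \<in> U \<Longrightarrow> w \<notin> U \<Longrightarrow> \<exists>a b. a \<in> U \<and> b \<notin> U \<and> {a,b} \<in> E"
  proof -
    fix u w U assume "u \<in> V" "w \<in> V" "u \<in> U" "w \<notin> U"
    then obtain p where "path_between E u w p" using conn by blast
    then show "\<exists>a b. a \<in> U \<and> b \<notin> U \<and> {a,b} \<in> E" using cut_path \<open>u \<in> U\<close> \<open>w \<notin> U\<close> unfolding path_between_def by blast
  qed
  have nbr: "\<And>s s'. s \<in> V \<Longrightarrow> s' \<in> V \<Longrightarrow> s \<noteq> s' \<Longrightarrow> \<exists>b. {s,b} \<in> E"
  proof -
    fix s s' assume "s \<in> V" "s' \<in> V" "s \<noteq> s'"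
    then obtain a b where "a \<in> {s}" "b \<notin> {s}" "{a,b} \<in> E" using cut[of s s' "{s}"] by blast
    then show "\<exists>b. {s,b} \<in> E" by blast
  qed
  have distS: "x1 \<noteq> y1" "x1 \<noteq> y2" "x2 \<noteq> y1" "x2 \<noteq> y2" using xs XY by blast+
  have xV: "x1 \<in> V" "x2 \<in> V" "y1 \<in> V" "y2 \<in> V" using SV unfolding S_def by auto
  have inI: "\<And>s u. s \<in> S \<Longrightarrow> {s,u} \<in> E \<Longrightarrow> (s, {s,u}) \<in> I" "\<And>s u. s \<in> S \<Longrightarrow> {u,s} \<in> E \<Longrightarrow> (s, {u,s}) \<in> I"
    unfolding I_def by auto
  have inS: "x1 \<in> S" "x2 \<in> S" "y1 \<in> S" "y2 \<in> S" unfolding S_def by auto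
  obtain b1 where b1: "{x1,b1} \<in> E" using nbr[OF xV(1) xV(2) xs(5)] by blast
  obtain b2 where b2: "{x2,b2} \<in> E" using nbr[OF xV(2) xV(1)] xs(5) by blast
  obtain c1 where c1: "{y1,c1} \<in> E" using nbr[OF xV(3) xV(4) xs(6)] by blast
  obtain c2 where c2: "{y2,c2} \<in> E" using nbr[OF xV(4) xV(3)] xs(6) by blast
  have bY: "b1 \<in> Y" "b2 \<in> Y" "c1 \<in> X" "c2 \<in> X" using opp b1 b2 c1 c2 xs by blast+
  have bn: "x1 \<noteq> b1" "x2 \<noteq> b2" "y1 \<noteq> c1" "y2 \<noteq> c2" using bY xs XY by blast+
  show "4 \<le> card (SIGMA s:{x1,x2,y1,y2}. {e \<in> snd T. s \<in> e})"
  proof -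
    have "length [(x1,{x1,b1}),(x2,{x2,b2}),(y1,{y1,c1}),(y2,{y2,c2})] \<le> card I"
      by (rule card_list_le[OF fI]) (use b1 b2 c1 c2 xs distS inI inS in auto)
    then show ?thesis unfolding I_def S_def E_def by simp
  qed
  show "6 \<le> card (SIGMA s:{x1,x2,y1,y2}. {e \<in> snd T. s \<in> e})" if small: "card (fst T - {x1,x2,y1,y2}) \<le> 1"
  proof -
    have fd: "finite (V - S)" using fV by simp
    have "card (V - S) \<le> Suc 0" using small unfolding V_def S_def by simp
    then have sm: "\<forall>a\<in>V-S. \<forall>b\<in>V-S. a = b" using card_le_Suc0_iff_eq[OF fd] by blast
    have "6 \<le> card I"
    proof (cases "V - S = {}")
      case True
      then have VS: "V = S" using SV by blast
      have b1S: "b1 = y1 \<or> b1 = y2" "b2 = y1 \<or> b2 = y2"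
        using inV[OF b1] inV[OF b2] bY XY xs unfolding VS S_def by auto
      show ?thesis
      proof (cases "b1 = b2")
        case False
        have "x2 \<notin> {x1,b1}" using xs bY XY by blast
        then obtain a b where ab: "a \<in> {x1,b1}" "b \<notin> {x1,b1}" "{a,b} \<in> E"
          using cut[of x1 x2 "{x1,b1}"] xV by blast
        have abS: "a \<in> S" "b \<in> S" using inV[OF ab(3)] VS by auto
        have "a \<notin> {x2,b2}" using ab(1) False xs bY XY by blast
        then have ne: "{a,b} \<noteq> {x2,b2}" by blast
        have ne2: "{x1,b1} \<noteq> {x2,b2}" using xs bY XY by (auto simp: doubleton_eq_iff)
        have ne3: "{x1,b1} \<noteq> {a,b}" using ab(2) by blast
        have ne4: "a \<noteq> b" using ab by blast
        show ?thesis
          by (rule three_edges_card[OF fI inI(1)[OF inS(1) b1] inI(2)[OF _ b1] inI(1)[OF inS(2) b2] inI(2)[OF _ b2]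
            inI(1)[OF abS(1) ab(3)] inI(2)[OF abS(2) ab(3)] bn(1) bn(2) ne4 ne2 ne3 ne[symmetric]])
           (use b1S inS in auto)
      next
        case True
        show ?thesis
        proof (cases "b1 = y1")
          case b1y: True
          have cS: "c2 \<in> S" using inV[OF c2] VS by auto
          have ne: "{x1,b1} \<noteq> {x2,b2}" "{x1,b1} \<noteq> {y2,c2}" "{x2,b2} \<noteq> {y2,c2}"
            using xs bY XY b1y True by (auto simp: doubleton_eq_iff)
          show ?thesis
            by (rule three_edges_card[OF fI inI(1)[OF inS(1) b1] inI(2)[OF _ b1] inI(1)[OF inS(2) b2] inI(2)[OF _ b2]
              inI(1)[OF inS(4) c2] inI(2)[OF cS c2] bn(1) bn(2) bn(4) ne])
             (use b1S inS in auto)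
        next
          case b1y: False
          then have b1y2: "b1 = y2" using b1S by blast
          have cS: "c1 \<in> S" using inV[OF c1] VS by auto
          have ne: "{x1,b1} \<noteq> {x2,b2}" "{x1,b1} \<noteq> {y1,c1}" "{x2,b2} \<noteq> {y1,c1}"
            using xs bY XY b1y2 True by (auto simp: doubleton_eq_iff)
          show ?thesis
            by (rule three_edges_card[OF fI inI(1)[OF inS(1) b1] inI(2)[OF _ b1] inI(1)[OF inS(2) b2] inI(2)[OF _ b2]
              inI(1)[OF inS(3) c1] inI(2)[OF cS c1] bn(1) bn(2) bn(3) ne])
             (use b1S inS in auto)
        qed
      qed
    next
      case False
      then obtain v where v: "v \<in> V" "v \<notin> S" by blast
      with sm have VS: "V = insert v S" using SV by blast
      have vx: "v \<noteq> x1" using v inS by blast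
      obtain n where "{v,n} \<in> E" using nbr[OF v(1) xV(1) vx] by blast
      then have ne0: "{e \<in> E. v \<in> e} \<noteq> {}" by blast
      have fv: "finite {e \<in> E. v \<in> e}" using fE by simp
      have "card {e \<in> E. v \<in> e} \<noteq> 1" using leaf v unfolding degree_def by blast
      moreover have "card {e \<in> E. v \<in> e} \<noteq> 0" using ne0 fv by simp
      ultimately have "2 \<le> card {e \<in> E. v \<in> e}" by linarith
      then obtain e1 e2 where e12: "e1 \<in> E" "v \<in> e1" "e2 \<in> E" "v \<in> e2" "e1 \<noteq> e2"
        using card_two[OF fv] by blast
      have "\<exists>n. e1 = {v,n}" using ed[OF e12(1)] e12(2) by (auto simp: insert_commute)
      then obtain n1 where n1: "e1 = {v,n1}" by blast
      have "\<exists>n. e2 = {v,n}" using ed[OF e12(3)] e12(4) by (auto simp: insert_commute)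
      then obtain n2 where n2: "e2 = {v,n2}" by blast
      have en: "{v,n1} \<in> E" "{v,n2} \<in> E" using n1 n2 e12 by auto
      have nn: "n1 \<noteq> n2" using n1 n2 e12(5) by blast
      have nv: "n1 \<noteq> v" "n2 \<noteq> v" using side[OF en(1)] side[OF en(2)] XY by blast+
      have nS: "n1 \<in> S" "n2 \<in> S" using inV[OF en(1)] inV[OF en(2)] nv VS by auto
      have vXY: "v \<in> X \<or> v \<in> Y" using v VG by blast
      then show ?thesis
      proof
        assume vY: "v \<in> Y"
        have cv: "c1 \<noteq> v" "c2 \<noteq> v" using bY vY XY by blast+
        have cS: "c1 \<in> S" "c2 \<in> S" using inV[OF c1] inV[OF c2] cv unfolding VS by blast+
        have vn: "v \<notin> {y1,c1}" "v \<notin> {y2,c2}" "y1 \<notin> {y2,c2}" using v(2) inS cv xs(6) bY xs(3) XY by blast+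
        have nn': "{v,n1} \<noteq> {v,n2}" using nn nv by (auto simp: doubleton_eq_iff)
        have ne: "{v,n1} \<noteq> {v,n2}" "{v,n1} \<noteq> {y1,c1}" "{v,n1} \<noteq> {y2,c2}" "{v,n2} \<noteq> {y1,c1}" "{v,n2} \<noteq> {y2,c2}" "{y1,c1} \<noteq> {y2,c2}"
          using nn' vn by blast+
        show ?thesis
          by (rule four_edges_card[OF fI inI(2)[OF nS(1) en(1)] inI(2)[OF nS(2) en(2)]
            inI(1)[OF inS(3) c1] inI(2)[OF cS(1) c1] inI(1)[OF inS(4) c2] inI(2)[OF cS(2) c2] bn(3) bn(4) ne])
      next
        assume vX: "v \<in> X"
        have cv: "b1 \<noteq> v" "b2 \<noteq> v" using bY vX XY by blast+
        have cS: "b1 \<in> S" "b2 \<in> S" using inV[OF b1] inV[OF b2] cv unfolding VS by blast+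
        have vn: "v \<notin> {x1,b1}" "v \<notin> {x2,b2}" "x1 \<notin> {x2,b2}" using v(2) inS cv xs(5) bY xs(1) XY by blast+
        have nn': "{v,n1} \<noteq> {v,n2}" using nn nv by (auto simp: doubleton_eq_iff)
        have ne: "{v,n1} \<noteq> {v,n2}" "{v,n1} \<noteq> {x1,b1}" "{v,n1} \<noteq> {x2,b2}" "{v,n2} \<noteq> {x1,b1}" "{v,n2} \<noteq> {x2,b2}" "{x1,b1} \<noteq> {x2,b2}"
          using nn' vn by blast+
        show ?thesis
          by (rule four_edges_card[OF fI inI(2)[OF nS(1) en(1)] inI(2)[OF nS(2) en(2)]
            inI(1)[OF inS(1) b1] inI(2)[OF cS(1) b1] inI(1)[OF inS(2) b2] inI(2)[OF cS(2) b2] bn(1) bn(2) ne])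
      qed
    qed
    then show ?thesis unfolding I_def S_def E_def .
  qed
qed
lemma sum5: "(\<Sum>i<5. f i) = f 0 + f 1 + f 2 + f 3 + (f 4 :: nat)" for f :: "nat \<Rightarrow> nat"
  by (simp add: eval_nat_numeral)

lemma arith5:
  fixes a0 a1 a2 a3 a4 c0 c1 c2 c3 c4 :: nat
  assumes "a0+a1+a2+a3+a4 \<le> 7" "c0+c1+c2+c3+c4 \<le> 22" "4 \<le> c0" "4 \<le> c1" "4 \<le> c2" "4 \<le> c3" "4 \<le> c4"
   "a0 \<le> 1 \<Longrightarrow> 6 \<le> c0" "a1 \<le> 1 \<Longrightarrow> 6 \<le> c1" "a2 \<le> 1 \<Longrightarrow> 6 \<le> c2" "a3 \<le> 1 \<Longrightarrow> 6 \<le> c3" "a4 \<le> 1 \<Longrightarrow> 6 \<le> c4"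
  shows False
  using assms by arith

lemma upper:
  fixes X Y :: "'a set"
  assumes XY: "X \<inter> Y = {}" and fX: "finite X" and fY: "finite Y" and cXY: "card X + card Y \<le> 11"
    and xs: "x1 \<in> X" "x2 \<in> X" "y1 \<in> Y" "y2 \<in> Y" "x1 \<noteq> x2" "y1 \<noteq> y2"
    and ci: "compl_indep (complete_bipartite X Y) {x1,x2,y1,y2} Ts 5"
  shows False
proof -
  define S where "S = {x1,x2,y1,y2}"
  define EG where "EG = {{x,y}|x y. x\<in>X \<and> y\<in>Y}"
  define I where "I i = (SIGMA s:S. {e \<in> snd (Ts i). s \<in> e})" for i
  define A where "A i = fst (Ts i) - S" for i
  have st: "\<And>i. i < 5 \<Longrightarrow> steiner_tree (complete_bipartite X Y) {x1,x2,y1,y2} (Ts i)"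
    using ci unfolding compl_indep_def by blast
  have dE: "\<And>p q. p < q \<Longrightarrow> q < 5 \<Longrightarrow> snd (Ts p) \<inter> snd (Ts q) = {}"
    using ci unfolding compl_indep_def by blast
  have dV: "\<And>p q. p < q \<Longrightarrow> q < 5 \<Longrightarrow> fst (Ts p) \<inter> fst (Ts q) = S"
    using ci unfolding compl_indep_def S_def by blast
  have c4: "4 \<le> card (I i)" if "i < 5" for i
    using tree_cost(1)[OF XY fX fY xs st[OF that]] unfolding I_def S_def .
  have c6: "6 \<le> card (I i)" if "i < 5" "card (A i) \<le> 1" for i
    using tree_cost(2)[OF XY fX fY xs st[OF that(1)]] that(2) unfolding I_def A_def S_def by simp
  have sub: "\<And>i. i < 5 \<Longrightarrow> snd (Ts i) \<subseteq> EG \<and> fst (Ts i) \<subseteq> X \<union> Y"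
    using st unfolding steiner_tree_def complete_bipartite_def EG_def by auto
  have fEG: "finite EG"
  proof -
    have "EG = (\<lambda>(x,y). {x,y}) ` (X \<times> Y)" unfolding EG_def by auto
    then show ?thesis using fX fY by simp
  qed
  have fS: "finite S" unfolding S_def by simp
  have fI: "\<forall>i\<in>{..<5::nat}. finite (I i)"
  proof
    fix i :: nat assume "i \<in> {..<5}"
    then have "I i \<subseteq> S \<times> EG" using sub[of i] unfolding I_def by auto
    then show "finite (I i)" using finite_subset fS fEG by blast
  qed
  have dI: "\<forall>i\<in>{..<5::nat}. \<forall>j\<in>{..<5}. i \<noteq> j \<longrightarrow> I i \<inter> I j = {}"
  proof (intro ballI impI)
    fix i j :: nat assume "i \<in> {..<5}" "j \<in> {..<5}" "i \<noteq> j"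
    then have "snd (Ts i) \<inter> snd (Ts j) = {}" using dE[of i j] dE[of j i] by (cases "i < j") auto
    then show "I i \<inter> I j = {}" unfolding I_def by blast
  qed
  have "(\<Sum>i<5. card (I i)) = card (\<Union>i<5. I i)"
    using card_UN_disjoint[OF _ fI dI] by simp
  also have "\<dots> \<le> card (SIGMA s:S. {e \<in> EG. s \<in> e})"
  proof (rule card_mono)
    show "finite (SIGMA s:S. {e \<in> EG. s \<in> e})" using fS fEG by auto
    show "(\<Union>i<5. I i) \<subseteq> (SIGMA s:S. {e \<in> EG. s \<in> e})" using sub unfolding I_def by blast
  qed
  also have "\<dots> = (\<Sum>s\<in>S. card {e \<in> EG. s \<in> e})" using fS fEG by simp
  also have "\<dots> \<le> 22"
  proof -
    have dist: "x1 \<noteq> y1" "x1 \<noteq> y2" "x2 \<noteq> y1" "x2 \<noteq> y2" using xs XY by blast+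
    have kx: "card {e \<in> EG. s \<in> e} \<le> card Y" if "s \<in> X" for s
    proof -
      have "{e \<in> EG. s \<in> e} \<subseteq> (\<lambda>b. {s,b}) ` Y" using that XY unfolding EG_def by auto
      then have "card {e \<in> EG. s \<in> e} \<le> card ((\<lambda>b. {s,b}) ` Y)" by (rule card_mono[rotated]) (simp add: fY)
      also have "\<dots> \<le> card Y" by (rule card_image_le[OF fY])
      finally show ?thesis .
    qed
    have ky: "card {e \<in> EG. s \<in> e} \<le> card X" if "s \<in> Y" for s
    proof -
      have "{e \<in> EG. s \<in> e} \<subseteq> (\<lambda>a. {a,s}) ` X" using that XY unfolding EG_def by auto
      then have "card {e \<in> EG. s \<in> e} \<le> card ((\<lambda>a. {a,s}) ` X)" by (rule card_mono[rotated]) (simp add: fX)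
      also have "\<dots> \<le> card X" by (rule card_image_le[OF fX])
      finally show ?thesis .
    qed
    have "(\<Sum>s\<in>S. card {e \<in> EG. s \<in> e}) = card {e \<in> EG. x1 \<in> e} + card {e \<in> EG. x2 \<in> e} + card {e \<in> EG. y1 \<in> e} + card {e \<in> EG. y2 \<in> e}"
      unfolding S_def using dist xs by simp
    then show ?thesis using kx[OF xs(1)] kx[OF xs(2)] ky[OF xs(3)] ky[OF xs(4)] cXY by linarith
  qed
  finally have sumI: "(\<Sum>i<5. card (I i)) \<le> 22" .
  have fA: "\<forall>i\<in>{..<5::nat}. finite (A i)"
  proof
    fix i :: nat assume "i \<in> {..<5}"
    then have "A i \<subseteq> X \<union> Y" using sub[of i] unfolding A_def by auto
    then show "finite (A i)" using finite_subset fX fY by blast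
  qed
  have dA: "\<forall>i\<in>{..<5::nat}. \<forall>j\<in>{..<5}. i \<noteq> j \<longrightarrow> A i \<inter> A j = {}"
  proof (intro ballI impI)
    fix i j :: nat assume "i \<in> {..<5}" "j \<in> {..<5}" "i \<noteq> j"
    then have "fst (Ts i) \<inter> fst (Ts j) = S" using dV[of i j] dV[of j i] by (cases "i < j") auto
    then show "A i \<inter> A j = {}" unfolding A_def by blast
  qed
  have "(\<Sum>i<5. card (A i)) = card (\<Union>i<5. A i)"
    using card_UN_disjoint[OF _ fA dA] by simp
  also have "\<dots> \<le> card ((X \<union> Y) - S)"
    by (rule card_mono) (use fX fY sub in \<open>auto simp: A_def\<close>)
  also have "\<dots> = card (X \<union> Y) - card S"
    by (rule card_Diff_subset) (use fS xs in \<open>auto simp: S_def\<close>)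
  also have "\<dots> \<le> 7"
  proof -
    have "card S = 4" unfolding S_def using xs XY by (auto simp: card_insert_if)
    moreover have "card (X \<union> Y) = card X + card Y" using card_Un_disjoint[OF fX fY XY] .
    ultimately show ?thesis using cXY by linarith
  qed
  finally have sumA: "(\<Sum>i<5. card (A i)) \<le> 7" .
  show False
    apply (rule arith5[of "card (A 0)" "card (A 1)" "card (A 2)" "card (A 3)" "card (A 4)"
          "card (I 0)" "card (I 1)" "card (I 2)" "card (I 3)" "card (I 4)"])
    using sumA sumI unfolding sum5 apply (simp_all only:)
    by (rule c4 c6; simp)+
qed
lemma mono_aux: "(\<forall>i<k. A i) \<and> (\<forall>p q. p < q \<and> q < k \<longrightarrow> B p q) \<Longrightarrow> (m::nat) \<le> k \<Longrightarrow>
    (\<forall>i<m. A i) \<and> (\<forall>p q. p < q \<and> q < m \<longrightarrow> B p q)"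
  by auto

lemma compl_indep_mono: "compl_indep G S Ts k \<Longrightarrow> m \<le> k \<Longrightarrow> compl_indep G S Ts m"
  unfolding compl_indep_def by (rule mono_aux)

theorem lemma3p9:
  fixes x y :: "nat \<Rightarrow> 'a"
  assumes "inj_on x {1..5}" and "inj_on y {1..6}"
    and "x ` {1..5} \<inter> y ` {1..6} = {}"
  shows "kappa_star (complete_bipartite (x ` {1..5}) (y ` {1..6})) {x 1, x 2, y 1, y 2} = 4"
proof -
  let ?X = "x ` {1..5}"
  let ?Y = "y ` {1..6}"
  let ?G = "complete_bipartite ?X ?Y"
  let ?S = "{x 1, x 2, y 1, y 2}"
  let ?K = "{k. \<exists>Ts. compl_indep ?G ?S Ts k}"
  have nxy: "\<And>i j. i \<in> {1..5} \<Longrightarrow> j \<in> {1..6} \<Longrightarrow> x i \<noteq> y j" using assms(3) by blast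
  have ix: "\<And>i j. i \<in> {1..5} \<Longrightarrow> j \<in> {1..5} \<Longrightarrow> x i = x j \<longleftrightarrow> i = j" using assms(1) by (simp add: inj_on_eq_iff)
  have iy: "\<And>i j. i \<in> {1..6} \<Longrightarrow> j \<in> {1..6} \<Longrightarrow> y i = y j \<longleftrightarrow> i = j" using assms(2) by (simp add: inj_on_eq_iff)
  have dist: "distinct [x 1, x 2, x 3, x 4, x 5, y 1, y 2, y 3, y 4, y 5]"
    by (simp add: ix iy nxy)
  have XX: "{x 1, x 2, x 3, x 4, x 5} \<subseteq> ?X" and YY: "{y 1, y 2, y 3, y 4, y 5} \<subseteq> ?Y" by auto
  have four: "4 \<in> ?K" using lower[OF dist XX YY] by simp
  have le4: "k \<le> 4" if "k \<in> ?K" for k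
  proof (rule ccontr)
    assume "\<not> k \<le> 4"
    from that obtain Ts where "compl_indep ?G ?S Ts k" by blast
    then have ci: "compl_indep ?G ?S Ts 5" using compl_indep_mono \<open>\<not> k \<le> 4\<close> by fastforce
    have cX: "card ?X \<le> 5" using card_image_le[of "{1..5::nat}" x] by simp
    have cY: "card ?Y \<le> 6" using card_image_le[of "{1..6::nat}" y] by simp
    show False
      by (rule upper[OF assms(3) _ _ _ _ _ _ _ _ _ ci]) (use cX cY ix iy in auto)
  qed
  have fK: "finite ?K" by (rule finite_subset[of _ "{..4}"]) (use le4 in auto)
  show ?thesis unfolding kappa_star_def
    by (rule Max_eqI[OF fK]) (use le4 four in auto)
qed
end
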